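(* Let $n\ge 1$ be a fixed integer, let $\phi\in(0,1)$, and let $m\ge 1$. Consider a sliding window consisting of $n$ sub-windows, the $i$-th sub-window containing the data points $x_{i,1},\dots,x_{i,m}$, so that the window contains the $nm$ data points $x=\{x_{i,j}: 1\le i\le n,\ 1\le j\le m\}$. Suppose the $x_{i,j}$ are independent and identically distributed with a continuous distribution having probability density $f$, and let $p_\phi$ be the $\phi$-quantile of this distribution, with $f(p_\phi)>0$. Let $y_i$ be the sample $\phi$-quantile of the $i$-th sub-window $\{x_{i,1},\dots,x_{i,m}\}$, let $y_a=\frac1n\sum_{i=1}^n y_i$, and let $y_e$ be the sample $\phi$-quantile of the whole window $x$. Then for every $\alpha\in(0,1)$, asymptotically as $m\to\infty$ (with $n$ fixed), with probability at least $1-\alpha$, \[ |y_a-y_e|\le \frac{2\,\Phi^{-1}(\alpha/2)\sqrt{\phi(1-\phi)}}{\sqrt{nm}\,f(p_\phi)}, \] i.e. $\liminf_{m\to\infty}\Pr\!\left(|y_a-y_e|\le \frac{2\Phi^{-1}(\alpha/2)\sqrt{\phi(1-\phi)}}{\sqrt{nm}\,f(p_\phi)}\right)\ge 1-\alpha$. In particular, for $\alpha=5\%$, asymptotically as $m\to\infty$, with probability at least $95\%$, \[ |y_a-y_e|\le \frac{2\times 1.96\sqrt{\phi(1-\phi)}}{\sqrt{nm}\,f(p_\phi)}. \]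
   Context: For a finite collection of $N$ values sorted increasingly as $e_1\le\dots\le e_N$, the sample $\phi$-quantile ($0<\phi\le 1$) is $e_{\lceil \phi N\rceil}$. Here $\Phi^{-1}(\beta)$ denotes the upper $\beta$-quantile of the standard normal distribution, i.e. the value $z$ with $\Pr(Z>z)=\beta$ for $Z\sim\mathcal N(0,1)$, where $\Phi$ is the cumulative distribution function of the standard normal distribution (so $\Phi^{-1}(0.025)=1.96$). *)

theory Defs
  imports "HOL-Probability.Probability"
begin

text \<open>Sample phi-quantile of a finite collection given as a list (order irrelevant):
  the element e_(ceil(phi N)) of the increasingly sorted values (1-based).\<close>
definition sample_quantile :: "real \<Rightarrow> real list \<Rightarrow> real" where
  "sample_quantile \<phi> xs = sort xs ! (nat \<lceil>\<phi> * real (length xs)\<rceil> - 1)"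

definition std_normal_upper_quantile :: "real \<Rightarrow> real" where
  "std_normal_upper_quantile \<beta> =
     (THE z. measure (density lborel (\<lambda>x. ennreal (std_normal_density x))) {z<..} = \<beta>)"

end

theory Submission
  imports Defs
begin

lemma sorted_count_le_iff:
  fixes s :: "real list"
  assumes "sorted s" "1 \<le> k" "k \<le> length s"
  shows "s ! (k - 1) \<le> t \<longleftrightarrow> k \<le> length (filter (\<lambda>x. x \<le> t) s)"
proof
  assume h: "s ! (k - 1) \<le> t"
  have "{..<k} \<subseteq> {i. i < length s \<and> s ! i \<le> t}"
  proof
    fix i assume "i \<in> {..<k}"
    then have "i \<le> k - 1" "i < length s" using assms by auto
    then have "s ! i \<le> s ! (k - 1)" using assms by (intro sorted_nth_mono) auto
    then show "i \<in> {i. i < length s \<and> s ! i \<le> t}" using h \<open>i < length s\<close> by auto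
  qed
  then have "card {..<k} \<le> card {i. i < length s \<and> s ! i \<le> t}"
    by (intro card_mono) auto
  then show "k \<le> length (filter (\<lambda>x. x \<le> t) s)" by (simp add: length_filter_conv_card)
next
  assume h: "k \<le> length (filter (\<lambda>x. x \<le> t) s)"
  show "s ! (k - 1) \<le> t"
  proof (rule ccontr)
    assume "\<not> s ! (k - 1) \<le> t"
    then have gt: "t < s ! (k - 1)" by simp
    have "{i. i < length s \<and> s ! i \<le> t} \<subseteq> {..<k - 1}"
    proof
      fix i assume "i \<in> {i. i < length s \<and> s ! i \<le> t}"
      then have i: "i < length s" "s ! i \<le> t" by auto
      show "i \<in> {..<k - 1}"
      proof (rule ccontr)
        assume "i \<notin> {..<k - 1}"
        then have "k - 1 \<le> i" by simp
        then have "s ! (k - 1) \<le> s ! i" using assms i by (intro sorted_nth_mono) auto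
        then show False using gt i by simp
      qed
    qed
    then have "card {i. i < length s \<and> s ! i \<le> t} \<le> card {..<k - 1}"
      by (intro card_mono) auto
    then have "length (filter (\<lambda>x. x \<le> t) s) \<le> k - 1" by (simp add: length_filter_conv_card)
    then show False using h assms by simp
  qed
qed

lemma quantile_le_iff:
  assumes "0 < \<phi>" "\<phi> \<le> 1" "xs \<noteq> []"
  shows "sample_quantile \<phi> xs \<le> t \<longleftrightarrow>
         real (nat \<lceil>\<phi> * real (length xs)\<rceil>) \<le> real (length (filter (\<lambda>x. x \<le> t) xs))"
proof -
  let ?N = "length xs" let ?k = "nat \<lceil>\<phi> * real ?N\<rceil>"
  have N: "?N \<ge> 1" using assms by (cases xs) auto
  have "0 < \<phi> * real ?N" using assms N by simp
  then have k1: "1 \<le> ?k" by linarith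
  have "\<phi> * real ?N \<le> real ?N" using assms N by (simp add: mult_le_cancel_right1)
  then have k2: "?k \<le> ?N" by (simp add: ceiling_le_iff nat_le_iff)
  have "length (filter (\<lambda>x. x \<le> t) (sort xs)) = length (filter (\<lambda>x. x \<le> t) xs)"
    by (metis mset_filter mset_sort size_mset)
  then show ?thesis unfolding sample_quantile_def
    using sorted_count_le_iff[of "sort xs" ?k t] k1 k2 by simp
qed

lemma count_map_sum:
  "real (length (filter (\<lambda>x. x \<le> t) (map g [0..<N]))) = (\<Sum>j<N. if g j \<le> t then 1 else 0)"
  by (induction N) auto

lemma quantile_le_iff_sum:
  assumes "0 < \<phi>" "\<phi> \<le> 1" "N > 0"
  shows "sample_quantile \<phi> (map g [0..<N]) \<le> t \<longleftrightarrow>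
         real (nat \<lceil>\<phi> * real N\<rceil>) \<le> (\<Sum>j<N. if g j \<le> t then 1 else (0::real))"
proof -
  have ne: "map g [0..<N] \<noteq> []" using assms by simp
  show ?thesis using quantile_le_iff[OF assms(1,2) ne, of t]
    by (simp only: length_map length_upt diff_zero count_map_sum)
qed

lemma (in prob_space) indep_vars_pair:
  assumes "indep_vars (\<lambda>_. borel) X I" "a \<in> I" "b \<in> I" "a \<noteq> b"
  shows "indep_var borel (X a) borel (X b :: _ \<Rightarrow> real)"
proof -
  have "indep_var (PiM {a} (\<lambda>_. borel)) (\<lambda>\<omega>. restrict (\<lambda>i. X i \<omega>) {a})
                  (PiM {b} (\<lambda>_. borel)) (\<lambda>\<omega>. restrict (\<lambda>i. X i \<omega>) {b})"
    using assms by (intro indep_var_restrict) auto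
  then have "indep_var borel ((\<lambda>f. f a) \<circ> (\<lambda>\<omega>. restrict (\<lambda>i. X i \<omega>) {a}))
                  borel ((\<lambda>f. f b) \<circ> (\<lambda>\<omega>. restrict (\<lambda>i. X i \<omega>) {b}))"
    by (rule indep_var_compose) auto
  moreover have "((\<lambda>f. f a) \<circ> (\<lambda>\<omega>. restrict (\<lambda>i. X i \<omega>) {a})) = X a"
    "((\<lambda>f. f b) \<circ> (\<lambda>\<omega>. restrict (\<lambda>i. X i \<omega>) {b})) = X b" by (auto simp: fun_eq_iff)
  ultimately show ?thesis by simp
qed

lemma (in prob_space) sum_cheb:
  fixes Z :: "nat \<Rightarrow> 'a \<Rightarrow> real"
  assumes meas[measurable]: "\<And>j. j < N \<Longrightarrow> Z j \<in> borel_measurable M"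
    and bnd: "\<And>j \<omega>. j < N \<Longrightarrow> \<bar>Z j \<omega>\<bar> \<le> 1"
    and ind: "\<And>i j. i < N \<Longrightarrow> j < N \<Longrightarrow> i \<noteq> j \<Longrightarrow> indep_var borel (Z i) borel (Z j)"
    and r: "r > 0"
  shows "prob {\<omega>\<in>space M. r \<le> \<bar>(\<Sum>j<N. Z j \<omega>) - (\<Sum>j<N. expectation (Z j))\<bar>}
           \<le> (\<Sum>j<N. expectation (\<lambda>\<omega>. (Z j \<omega>)\<^sup>2)) / r\<^sup>2"
proof -
  define c where "c j = expectation (Z j)" for j
  define S where "S \<omega> = (\<Sum>j<N. Z j \<omega>)" for \<omega>
  have intZ: "integrable M (Z j)" if "j < N" for j
    using that bnd by (intro integrable_const_bound[where B=1]) auto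
  have intZ2: "integrable M (\<lambda>\<omega>. Z i \<omega> * Z j \<omega>)" if "i < N" "j < N" for i j
  proof (rule integrable_const_bound[where B=1])
    show "AE x in M. norm (Z i x * Z j x) \<le> 1"
      using bnd[OF that(1)] bnd[OF that(2)] by (auto simp: abs_mult intro!: mult_le_one AE_I2)
  qed (use that in auto)
  have Smeas[measurable]: "S \<in> borel_measurable M" unfolding S_def by measurable
  have ES: "expectation S = (\<Sum>j<N. c j)"
    unfolding S_def c_def by (rule Bochner_Integration.integral_sum) (use intZ in auto)
  have sq: "(S \<omega> - expectation S)\<^sup>2 = (\<Sum>i<N. \<Sum>j<N. (Z i \<omega> - c i) * (Z j \<omega> - c j))" for \<omega>
    unfolding ES S_def power2_eq_square sum_subtractf[symmetric] sum_product by simp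
  have intS2: "integrable M (\<lambda>x. (S x)^2)"
  proof (rule integrable_const_bound[where B="real N ^ 2"])
    have "\<bar>S x\<bar> \<le> real N" for x
    proof -
      have "\<bar>S x\<bar> \<le> (\<Sum>j<N. \<bar>Z j x\<bar>)" unfolding S_def by (rule sum_abs)
      also have "\<dots> \<le> (\<Sum>j<N. 1)" by (intro sum_mono bnd) auto
      finally show ?thesis by simp
    qed
    then have "(S x)^2 \<le> real N ^ 2" for x
      by (metis abs_le_square_iff abs_of_nat)
    then show "AE x in M. norm ((S x)^2) \<le> real N ^ 2" by simp
  qed auto
  have cross: "expectation (\<lambda>\<omega>. (Z i \<omega> - c i) * (Z j \<omega> - c j)) = 0"
    if "i < N" "j < N" "i \<noteq> j" for i j
  proof -
    have "indep_var borel ((\<lambda>x. x - c i) \<circ> Z i) borel ((\<lambda>x. x - c j) \<circ> Z j)"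
      by (rule indep_var_compose[OF ind[OF that]]) auto
    then have "expectation (\<lambda>\<omega>. ((\<lambda>x. x - c i) \<circ> Z i) \<omega> * ((\<lambda>x. x - c j) \<circ> Z j) \<omega>)
       = expectation ((\<lambda>x. x - c i) \<circ> Z i) * expectation ((\<lambda>x. x - c j) \<circ> Z j)"
      by (rule indep_var_lebesgue_integral) (use that intZ in \<open>auto simp: o_def\<close>)
    moreover have "expectation ((\<lambda>x. x - c i) \<circ> Z i) = 0"
      using intZ[OF that(1)] by (simp add: o_def c_def prob_space)
    ultimately show ?thesis by (simp add: o_def)
  qed
  have diag: "expectation (\<lambda>\<omega>. (Z i \<omega> - c i) * (Z i \<omega> - c i)) \<le> expectation (\<lambda>\<omega>. (Z i \<omega>)\<^sup>2)"
    if "i < N" for i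
  proof -
    have "(\<lambda>\<omega>. (Z i \<omega> - c i) * (Z i \<omega> - c i)) = (\<lambda>\<omega>. Z i \<omega> * Z i \<omega> - 2 * c i * Z i \<omega> + c i * c i)"
      by (auto simp: algebra_simps fun_eq_iff)
    then have "expectation (\<lambda>\<omega>. (Z i \<omega> - c i) * (Z i \<omega> - c i))
       = expectation (\<lambda>\<omega>. Z i \<omega> * Z i \<omega>) - 2 * c i * c i + c i * c i"
      using intZ[OF that] intZ2[OF that that] by (simp add: c_def prob_space)
    then show ?thesis by (simp add: power2_eq_square)
  qed
  have "variance S = (\<Sum>i<N. \<Sum>j<N. expectation (\<lambda>\<omega>. (Z i \<omega> - c i) * (Z j \<omega> - c j)))"
  proof -
    have "variance S = expectation (\<lambda>\<omega>. \<Sum>i<N. \<Sum>j<N. (Z i \<omega> - c i) * (Z j \<omega> - c j))"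
      by (simp only: sq)
    also have "\<dots> = (\<Sum>i<N. expectation (\<lambda>\<omega>. \<Sum>j<N. (Z i \<omega> - c i) * (Z j \<omega> - c j)))"
      by (rule Bochner_Integration.integral_sum) (use intZ intZ2 in \<open>auto simp: algebra_simps\<close>)
    also have "\<dots> = (\<Sum>i<N. \<Sum>j<N. expectation (\<lambda>\<omega>. (Z i \<omega> - c i) * (Z j \<omega> - c j)))"
      by (intro sum.cong refl Bochner_Integration.integral_sum) (use intZ intZ2 in \<open>auto simp: algebra_simps\<close>)
    finally show ?thesis .
  qed
  also have "\<dots> = (\<Sum>i<N. expectation (\<lambda>\<omega>. (Z i \<omega> - c i) * (Z i \<omega> - c i)))"
  proof (intro sum.cong refl)
    fix i assume i: "i \<in> {..<N}"
    have "(\<Sum>j<N. expectation (\<lambda>\<omega>. (Z i \<omega> - c i) * (Z j \<omega> - c j)))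
      = expectation (\<lambda>\<omega>. (Z i \<omega> - c i) * (Z i \<omega> - c i)) +
        (\<Sum>j\<in>{..<N}-{i}. expectation (\<lambda>\<omega>. (Z i \<omega> - c i) * (Z j \<omega> - c j)))"
      using i by (subst sum.remove[of _ i]) auto
    also have "(\<Sum>j\<in>{..<N}-{i}. expectation (\<lambda>\<omega>. (Z i \<omega> - c i) * (Z j \<omega> - c j))) = 0"
      using i by (intro sum.neutral) (auto intro!: cross)
    finally show "(\<Sum>j<N. expectation (\<lambda>\<omega>. (Z i \<omega> - c i) * (Z j \<omega> - c j)))
      = expectation (\<lambda>\<omega>. (Z i \<omega> - c i) * (Z i \<omega> - c i))" by simp
  qed
  also have "\<dots> \<le> (\<Sum>j<N. expectation (\<lambda>\<omega>. (Z j \<omega>)\<^sup>2))"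
    by (intro sum_mono diag) auto
  finally have V: "variance S \<le> (\<Sum>j<N. expectation (\<lambda>\<omega>. (Z j \<omega>)\<^sup>2))" .
  have "prob {\<omega>\<in>space M. \<bar>S \<omega> - expectation S\<bar> \<ge> r} \<le> variance S / r\<^sup>2"
    by (rule Chebyshev_inequality) (use intS2 r in auto)
  also have "\<dots> \<le> (\<Sum>j<N. expectation (\<lambda>\<omega>. (Z j \<omega>)\<^sup>2)) / r\<^sup>2"
    using V r by (simp add: divide_right_mono)
  finally show ?thesis unfolding S_def c_def ES[unfolded S_def c_def] .
qed

lemma grid_exists:
  fixes a b e :: real assumes "e > 0"
  shows "\<exists>T. finite T \<and> (\<forall>w. a \<le> w \<and> w \<le> b \<longrightarrow> (\<exists>t\<in>T. w \<le> t \<and> t \<le> w + e))"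
proof -
  define L where "L = nat \<lceil>(b - a) / e\<rceil>"
  define T where "T = (\<lambda>l. a + real l * e) ` {..L}"
  have "\<exists>t\<in>T. w \<le> t \<and> t \<le> w + e" if w: "a \<le> w" "w \<le> b" for w
  proof -
    define l where "l = nat \<lceil>(w - a) / e\<rceil>"
    have l1: "(w - a) / e \<le> real l" unfolding l_def by linarith
    have l2: "real l < (w - a) / e + 1" unfolding l_def using w assms
      by (simp add: divide_nonneg_nonneg) linarith
    have "(w - a) / e \<le> (b - a) / e" using w assms by (simp add: divide_right_mono)
    then have "l \<le> L" unfolding l_def L_def by (intro nat_mono ceiling_mono)
    moreover have "w \<le> a + real l * e" using l1 assms by (simp add: field_simps)
    moreover have "a + real l * e \<le> w + e" using l2 assms by (simp add: field_simps)
    ultimately show ?thesis unfolding T_def by auto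
  qed
  moreover have "finite T" unfolding T_def by simp
  ultimately show ?thesis by blast
qed

lemma F_cont_seq:
  fixes F :: "real \<Rightarrow> real" and h :: "nat \<Rightarrow> real"
  assumes Fd: "\<And>e. e > 0 \<Longrightarrow> \<exists>\<delta>>0. \<forall>h. \<bar>h\<bar> < \<delta> \<longrightarrow> \<bar>F (p + h) - F p - h * fp\<bar> \<le> e * \<bar>h\<bar>"
    and fp: "fp > 0" and h: "h \<longlonglongrightarrow> 0"
  shows "(\<lambda>m. F (p + h m)) \<longlonglongrightarrow> F p"
proof (rule tendstoI)
  fix r :: real assume r: "r > 0"
  obtain \<delta> where d: "\<delta> > 0" "\<forall>h. \<bar>h\<bar> < \<delta> \<longrightarrow> \<bar>F (p + h) - F p - h * fp\<bar> \<le> 1 * \<bar>h\<bar>"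
    using Fd[of 1] by auto
  have "min \<delta> (r / (fp + 1)) > 0" using d r fp by simp
  then have "eventually (\<lambda>m. dist (h m) 0 < min \<delta> (r / (fp + 1))) sequentially"
    using tendstoD[OF h] by blast
  then show "eventually (\<lambda>m. dist (F (p + h m)) (F p) < r) sequentially"
  proof eventually_elim
    case (elim m)
    then have hm: "\<bar>h m\<bar> < \<delta>" "\<bar>h m\<bar> < r / (fp + 1)" by auto
    have "\<bar>F (p + h m) - F p - h m * fp\<bar> \<le> \<bar>h m\<bar>" using d hm by auto
    moreover have "fp * h m \<le> fp * \<bar>h m\<bar>" using fp by (auto intro: mult_left_mono)
    moreover have "- (fp * \<bar>h m\<bar>) \<le> fp * h m" using mult_left_mono[of "-\<bar>h m\<bar>" "h m" fp] fp by simp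
    ultimately have "\<bar>F (p + h m) - F p\<bar> \<le> \<bar>h m\<bar> * (fp + 1)"
      by (auto simp: algebra_simps abs_le_iff)
    also have "\<dots> < r" using hm fp by (simp add: field_simps)
    finally show ?case by (simp add: dist_real_def)
  qed
qed

lemma F_scaled_seq:
  fixes F :: "real \<Rightarrow> real" and s :: "nat \<Rightarrow> real"
  assumes Fd: "\<And>e. e > 0 \<Longrightarrow> \<exists>\<delta>>0. \<forall>h. \<bar>h\<bar> < \<delta> \<longrightarrow> \<bar>F (p + h) - F p - h * fp\<bar> \<le> e * \<bar>h\<bar>"
    and s: "filterlim s at_top sequentially"
  shows "(\<lambda>m. s m * (F (p + u / s m) - F p)) \<longlonglongrightarrow> u * fp"
proof (rule tendstoI)
  fix r :: real assume r: "r > 0"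
  obtain \<delta> where d: "\<delta> > 0" "\<forall>h. \<bar>h\<bar> < \<delta> \<longrightarrow> \<bar>F (p + h) - F p - h * fp\<bar> \<le> (r / (\<bar>u\<bar> + 1)) * \<bar>h\<bar>"
    using Fd[of "r / (\<bar>u\<bar> + 1)"] r by auto
  have "(\<lambda>m. u / s m) \<longlonglongrightarrow> 0"
    by (rule tendsto_divide_0[OF tendsto_const]) (rule filterlim_at_top_imp_at_infinity[OF s])
  then have ev1: "eventually (\<lambda>m. dist (u / s m) 0 < \<delta>) sequentially"
    using d by (intro tendstoD) auto
  have ev2: "eventually (\<lambda>m. s m > 0) sequentially"
    using s by (simp add: filterlim_at_top_dense)
  show "eventually (\<lambda>m. dist (s m * (F (p + u / s m) - F p)) (u * fp) < r) sequentially"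
    using ev1 ev2
  proof eventually_elim
    case (elim m)
    then have hm: "\<bar>u / s m\<bar> < \<delta>" and sp: "s m > 0" by auto
    have b: "\<bar>F (p + u / s m) - F p - u / s m * fp\<bar> \<le> (r / (\<bar>u\<bar> + 1)) * \<bar>u / s m\<bar>"
      using d(2) hm by blast
    have "s m * (F (p + u / s m) - F p) - u * fp = s m * (F (p + u / s m) - F p - u / s m * fp)"
      using sp by (simp add: field_simps)
    then have "\<bar>s m * (F (p + u / s m) - F p) - u * fp\<bar> = s m * \<bar>F (p + u / s m) - F p - u / s m * fp\<bar>"
      using sp by (simp add: abs_mult)
    also have "\<dots> \<le> s m * ((r / (\<bar>u\<bar> + 1)) * \<bar>u / s m\<bar>)"
      using b sp by (intro mult_left_mono) auto
    also have "\<dots> = r * \<bar>u\<bar> / (\<bar>u\<bar> + 1)"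
    proof -
      have "\<bar>u / s m\<bar> = \<bar>u\<bar> / s m" using sp by (simp add: abs_div)
      then show ?thesis using sp by simp
    qed
    also have "\<dots> < r" using r by (simp add: field_simps)
    finally show ?case by (simp add: dist_real_def)
  qed
qed

lemma (in prob_space) quantile_meas:
  assumes "0 < \<phi>" "\<phi> \<le> 1" "\<And>j. j < N \<Longrightarrow> Y j \<in> borel_measurable M"
  shows "(\<lambda>\<omega>. sample_quantile \<phi> (map (\<lambda>j. Y j \<omega>) [0..<N])) \<in> borel_measurable M"
proof (cases "N = 0")
  case True then show ?thesis by simp
next
  case False
  have Gm: "(\<lambda>\<omega>. \<Sum>j<N. if Y j \<omega> \<le> x then 1 else (0::real)) \<in> borel_measurable M" for x
  proof (rule borel_measurable_sum)
    fix j assume "j \<in> {..<N}"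
    then have [measurable]: "Y j \<in> borel_measurable M" using assms by auto
    show "(\<lambda>\<omega>. if Y j \<omega> \<le> x then 1 else (0::real)) \<in> borel_measurable M" by measurable
  qed
  show ?thesis unfolding borel_measurable_iff_le
  proof
    fix a
    have "{w \<in> space M. sample_quantile \<phi> (map (\<lambda>j. Y j w) [0..<N]) \<le> a}
        = {w \<in> space M. real (nat \<lceil>\<phi> * real N\<rceil>) \<le> (\<Sum>j<N. if Y j w \<le> a then 1 else (0::real))}"
      using quantile_le_iff_sum[OF assms(1,2), of N] False by auto
    also have "\<dots> \<in> sets M" using Gm[of a] by measurable
    finally show "{w \<in> space M. sample_quantile \<phi> (map (\<lambda>j. Y j w) [0..<N]) \<le> a} \<in> sets M" .
  qed
qed

lemma (in prob_space) expectation_ind: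
  fixes Y :: "'a \<Rightarrow> real"
  assumes [measurable]: "Y \<in> borel_measurable M"
  shows "expectation (\<lambda>\<omega>. if Y \<omega> \<le> x then 1 else (0::real)) = prob {\<omega>\<in>space M. Y \<omega> \<le> x}"
proof -
  have "expectation (\<lambda>\<omega>. if Y \<omega> \<le> x then 1 else (0::real))
      = expectation (indicator {\<omega>\<in>space M. Y \<omega> \<le> x})"
    by (intro Bochner_Integration.integral_cong) (auto simp: indicator_def)
  also have "\<dots> = prob {\<omega>\<in>space M. Y \<omega> \<le> x}" by (simp add: Int_absorb2 subset_eq)
  finally show ?thesis .
qed

lemma (in prob_space) integrable_ind:
  fixes Y :: "'a \<Rightarrow> real"
  assumes [measurable]: "Y \<in> borel_measurable M"
  shows "integrable M (\<lambda>\<omega>. if Y \<omega> \<le> x then 1 else (0::real))"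
proof -
  have "Measurable.pred M (\<lambda>\<omega>. Y \<omega> \<le> x)" by measurable
  then have "(\<lambda>\<omega>. if Y \<omega> \<le> x then 1 else (0::real)) \<in> borel_measurable M"
    by (intro measurable_If) auto
  then show ?thesis by (intro integrable_const_bound[where B=1]) auto
qed

lemma (in prob_space) dev_bound:
  fixes Y :: "nat \<Rightarrow> 'a \<Rightarrow> real"
  assumes meas: "\<And>j. j < N \<Longrightarrow> Y j \<in> borel_measurable M"
    and ind: "\<And>i j. i < N \<Longrightarrow> j < N \<Longrightarrow> i \<noteq> j \<Longrightarrow> indep_var borel (Y i) borel (Y j)"
    and FY: "\<And>j x. j < N \<Longrightarrow> prob {\<omega>\<in>space M. Y j \<omega> \<le> x} = F x"
    and r: "r > 0"
  shows "prob {\<omega>\<in>space M. r \<le> \<bar>(\<Sum>j<N. (if Y j \<omega> \<le> a then 1 else 0) - (if Y j \<omega> \<le> b then 1 else 0))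
            - real N * (F a - F b)\<bar>} \<le> real N * (F a + F b - 2 * F (min a b)) / r\<^sup>2"
proof -
  define g where "g x = (if x \<le> a then 1 else 0) - (if x \<le> b then 1 else (0::real))" for x
  have gm[measurable]: "g \<in> borel_measurable borel" unfolding g_def by measurable
  define Z where "Z j = g \<circ> Y j" for j
  have Zm: "Z j \<in> borel_measurable M" if "j < N" for j
    using meas[OF that] unfolding Z_def by measurable
  have Zb: "\<bar>Z j \<omega>\<bar> \<le> 1" for j \<omega> unfolding Z_def g_def by auto
  have Zi: "indep_var borel (Z i) borel (Z j)" if "i < N" "j < N" "i \<noteq> j" for i j
    unfolding Z_def by (rule indep_var_compose[OF ind[OF that]]) auto
  have EZ: "expectation (Z j) = F a - F b" if "j < N" for j
  proof -
    have [measurable]: "Y j \<in> borel_measurable M" using meas that by auto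
    have "expectation (Z j) = expectation (\<lambda>\<omega>. if Y j \<omega> \<le> a then 1 else (0::real))
          - expectation (\<lambda>\<omega>. if Y j \<omega> \<le> b then 1 else (0::real))"
      unfolding Z_def g_def o_def
      by (rule Bochner_Integration.integral_diff) (auto intro!: integrable_ind)
    then show ?thesis using expectation_ind[OF meas[OF that], of a] expectation_ind[OF meas[OF that], of b] FY[OF that] by simp
  qed
  have EZ2: "expectation (\<lambda>\<omega>. (Z j \<omega>)\<^sup>2) = F a + F b - 2 * F (min a b)" if "j < N" for j
  proof -
    have [measurable]: "Y j \<in> borel_measurable M" using meas that by auto
    define I where "I x = (\<lambda>\<omega>. if Y j \<omega> \<le> x then 1 else (0::real))" for x
    have iI: "integrable M (I x)" for x unfolding I_def by (rule integrable_ind) simp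
    have EI: "expectation (I x) = F x" for x
      unfolding I_def using expectation_ind[OF meas[OF that], of x] FY[OF that] by simp
    have eq: "(\<lambda>\<omega>. (Z j \<omega>)\<^sup>2) = (\<lambda>\<omega>. I a \<omega> + I b \<omega> - 2 * I (min a b) \<omega>)"
      unfolding Z_def g_def I_def by (auto simp: fun_eq_iff power2_eq_square)
    have "expectation (\<lambda>\<omega>. I a \<omega> + I b \<omega> - 2 * I (min a b) \<omega>) =
       expectation (\<lambda>\<omega>. I a \<omega> + I b \<omega>) - expectation (\<lambda>\<omega>. 2 * I (min a b) \<omega>)"
      by (intro Bochner_Integration.integral_diff Bochner_Integration.integrable_add
          integrable_mult_right iI)
    also have "expectation (\<lambda>\<omega>. I a \<omega> + I b \<omega>) = expectation (I a) + expectation (I b)"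
      by (intro Bochner_Integration.integral_add iI)
    also have "expectation (\<lambda>\<omega>. 2 * I (min a b) \<omega>) = 2 * expectation (I (min a b))"
      by simp
    finally show ?thesis unfolding eq EI .
  qed
  have "prob {\<omega>\<in>space M. r \<le> \<bar>(\<Sum>j<N. Z j \<omega>) - (\<Sum>j<N. expectation (Z j))\<bar>}
           \<le> (\<Sum>j<N. expectation (\<lambda>\<omega>. (Z j \<omega>)\<^sup>2)) / r\<^sup>2"
    by (rule sum_cheb[OF Zm Zb Zi r])
  moreover have "(\<Sum>j<N. expectation (Z j)) = real N * (F a - F b)" using EZ by simp
  moreover have "(\<Sum>j<N. expectation (\<lambda>\<omega>. (Z j \<omega>)\<^sup>2)) = real N * (F a + F b - 2 * F (min a b))"
    using EZ2 by simp
  moreover have "Z j \<omega> = (if Y j \<omega> \<le> a then 1 else 0) - (if Y j \<omega> \<le> b then 1 else 0)" for j \<omega>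
    unfolding Z_def g_def by simp
  ultimately show ?thesis by simp
qed

lemma (in prob_space) count_bound:
  fixes Y :: "nat \<Rightarrow> 'a \<Rightarrow> real"
  assumes meas: "\<And>j. j < N \<Longrightarrow> Y j \<in> borel_measurable M"
    and ind: "\<And>i j. i < N \<Longrightarrow> j < N \<Longrightarrow> i \<noteq> j \<Longrightarrow> indep_var borel (Y i) borel (Y j)"
    and FY: "\<And>j x. j < N \<Longrightarrow> prob {\<omega>\<in>space M. Y j \<omega> \<le> x} = F x"
    and r: "r > 0"
  shows "prob {\<omega>\<in>space M. r \<le> \<bar>(\<Sum>j<N. (if Y j \<omega> \<le> a then 1 else 0)) - real N * F a\<bar>}
           \<le> real N * F a / r\<^sup>2"
proof -
  define g where "g x = (if x \<le> a then 1 else (0::real))" for x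
  have gm[measurable]: "g \<in> borel_measurable borel" unfolding g_def by measurable
  define Z where "Z j = g \<circ> Y j" for j
  have Zm: "Z j \<in> borel_measurable M" if "j < N" for j
    using meas[OF that] unfolding Z_def by measurable
  have Zb: "\<bar>Z j \<omega>\<bar> \<le> 1" for j \<omega> unfolding Z_def g_def by auto
  have Zi: "indep_var borel (Z i) borel (Z j)" if "i < N" "j < N" "i \<noteq> j" for i j
    unfolding Z_def by (rule indep_var_compose[OF ind[OF that]]) auto
  have EZ: "expectation (Z j) = F a" if "j < N" for j
    using expectation_ind[OF meas[OF that]] FY[OF that] unfolding Z_def g_def o_def by simp
  have EZ2: "expectation (\<lambda>\<omega>. (Z j \<omega>)\<^sup>2) = F a" if "j < N" for j
  proof -
    have "(\<lambda>\<omega>. (Z j \<omega>)\<^sup>2) = Z j" unfolding Z_def g_def by (auto simp: fun_eq_iff)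
    then show ?thesis using EZ[OF that] by simp
  qed
  have "prob {\<omega>\<in>space M. r \<le> \<bar>(\<Sum>j<N. Z j \<omega>) - (\<Sum>j<N. expectation (Z j))\<bar>}
           \<le> (\<Sum>j<N. expectation (\<lambda>\<omega>. (Z j \<omega>)\<^sup>2)) / r\<^sup>2"
    by (rule sum_cheb[OF Zm Zb Zi r])
  moreover have "(\<Sum>j<N. expectation (Z j)) = real N * F a" using EZ by simp
  moreover have "(\<Sum>j<N. expectation (\<lambda>\<omega>. (Z j \<omega>)\<^sup>2)) = real N * F a"
    using EZ2 by simp
  ultimately show ?thesis unfolding Z_def g_def o_def by simp
qed

lemma caseA_arith:
  fixes sm fp e t Gp Ga kk Nm \<phi> Fa :: real
  assumes "sm > 0" "fp > 0" "e > 0" "Nm = sm * sm"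
    "Ga < kk" "kk < Nm * \<phi> + 1" "- (Gp - Nm * \<phi>) \<le> t * (sm * fp)"
    "(t + e) * fp - e * fp / 4 < sm * (Fa - \<phi>)" "4 / (e * fp) \<le> sm"
  shows "sm * (e * fp / 2) \<le> \<bar>(Ga - Gp) - Nm * (Fa - \<phi>)\<bar>"
proof -
  have 1: "sm * ((t + e) * fp - e * fp / 4) < sm * (sm * (Fa - \<phi>))"
    using assms by (intro mult_strict_left_mono) auto
  have "4 \<le> sm * (e * fp)" using assms by (simp add: divide_le_eq)
  then have 2: "1 \<le> sm * e * fp / 4" by (simp add: mult.assoc)
  have 3: "Nm * (Fa - \<phi>) = sm * (sm * (Fa - \<phi>))" using assms by simp
  have 4: "sm * ((t + e) * fp - e * fp / 4) = t * (sm * fp) + 3 * (sm * e * fp / 4)"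
    by (simp add: algebra_simps)
  have "(Ga - Gp) - Nm * (Fa - \<phi>) < - (sm * (e * fp / 2))"
    using 1 2 3 4 assms(5,6,7) by (simp add: algebra_simps)
  then show ?thesis by linarith
qed

lemma caseB_arith:
  fixes sm fp e t Gp Ga kk Nm \<phi> Fa :: real
  assumes "sm > 0" "fp > 0" "e > 0" "Nm = sm * sm"
    "kk \<le> Ga" "Nm * \<phi> \<le> kk" "Gp - Nm * \<phi> \<le> - ((t + e) * (sm * fp))"
    "sm * (Fa - \<phi>) < t * fp + e * fp / 2"
  shows "sm * (e * fp / 2) \<le> \<bar>(Ga - Gp) - Nm * (Fa - \<phi>)\<bar>"
proof -
  have 1: "sm * (sm * (Fa - \<phi>)) < sm * (t * fp + e * fp / 2)"
    using assms by (intro mult_strict_left_mono) auto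
  have 3: "Nm * (Fa - \<phi>) = sm * (sm * (Fa - \<phi>))" using assms by simp
  have 4: "sm * (t * fp + e * fp / 2) = t * (sm * fp) + sm * (e * fp / 2)"
    by (simp add: algebra_simps)
  have 5: "(t + e) * (sm * fp) = t * (sm * fp) + sm * (e * fp)" by (simp add: algebra_simps)
  have "sm * (e * fp / 2) < (Ga - Gp) - Nm * (Fa - \<phi>)"
    using 1 3 4 5 assms(5,6,7) by linarith
  then show ?thesis by linarith
qed

lemma (in prob_space) core:
  fixes Y :: "nat \<Rightarrow> nat \<Rightarrow> 'a \<Rightarrow> real" and N :: "nat \<Rightarrow> nat" and F :: "real \<Rightarrow> real"
  assumes meas: "\<And>m j. j < N m \<Longrightarrow> Y m j \<in> borel_measurable M"
    and ind: "\<And>m i j. i < N m \<Longrightarrow> j < N m \<Longrightarrow> i \<noteq> j \<Longrightarrow> indep_var borel (Y m i) borel (Y m j)"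
    and FY: "\<And>m j x. j < N m \<Longrightarrow> prob {\<omega>\<in>space M. Y m j \<omega> \<le> x} = F x"
    and Nlim: "filterlim N at_top sequentially"
    and \<phi>: "0 < \<phi>" "\<phi> < 1" and Fp: "F p = \<phi>"
    and Fd: "\<And>e. e > 0 \<Longrightarrow> \<exists>\<delta>>0. \<forall>h. \<bar>h\<bar> < \<delta> \<longrightarrow> \<bar>F (p + h) - F p - h * fp\<bar> \<le> e * \<bar>h\<bar>"
    and fp: "fp > 0" and eps: "\<epsilon> > 0"
  shows "(\<lambda>m. prob {\<omega>\<in>space M. \<epsilon> < \<bar>sqrt (real (N m)) * (sample_quantile \<phi> (map (\<lambda>j. Y m j \<omega>) [0..<N m]) - p)
            + (real (length (filter (\<lambda>x. x \<le> p) (map (\<lambda>j. Y m j \<omega>) [0..<N m]))) - real (N m) * \<phi>)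
              / (sqrt (real (N m)) * fp)\<bar>}) \<longlonglongrightarrow> 0"
proof -
  define s where "s m = sqrt (real (N m))" for m
  define q where "q m \<omega> = sample_quantile \<phi> (map (\<lambda>j. Y m j \<omega>) [0..<N m])" for m \<omega>
  define G where "G m x \<omega> = (\<Sum>j<N m. if Y m j \<omega> \<le> x then 1 else (0::real))" for m x \<omega>
  define kk where "kk m = real (nat \<lceil>\<phi> * real (N m)\<rceil>)" for m
  define e where "e = \<epsilon> / 3"
  have e: "e > 0" using eps by (simp add: e_def)
  have qm[measurable]: "q m \<in> borel_measurable M" for m
    unfolding q_def using quantile_meas[of \<phi> "N m" "Y m"] \<phi> meas by auto
  have Gm[measurable]: "G m x \<in> borel_measurable M" for m x
    unfolding G_def
  proof (rule borel_measurable_sum)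
    fix j assume "j \<in> {..<N m}"
    then have [measurable]: "Y m j \<in> borel_measurable M" using meas by auto
    show "(\<lambda>\<omega>. if Y m j \<omega> \<le> x then 1 else (0::real)) \<in> borel_measurable M" by measurable
  qed
  have qle: "q m \<omega> \<le> x \<longleftrightarrow> kk m \<le> G m x \<omega>" if "N m > 0" for m \<omega> x
    unfolding q_def kk_def G_def using quantile_le_iff_sum[of \<phi> "N m"] \<phi> that by simp
  have kk1: "real (N m) * \<phi> \<le> kk m" for m
    unfolding kk_def using real_nat_ceiling_ge[of "\<phi> * real (N m)"] by (simp add: mult.commute)
  have kk2: "kk m < real (N m) * \<phi> + 1" for m
  proof -
    have "0 \<le> \<phi> * real (N m)" using \<phi> by simp
    then have "kk m = real_of_int \<lceil>\<phi> * real (N m)\<rceil>" unfolding kk_def by simp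
    then show ?thesis by (simp add: mult.commute) linarith
  qed
  have sN: "real (N m) = s m * s m" for m unfolding s_def by simp
  have s_top: "filterlim s at_top sequentially"
  proof -
    have "filterlim (\<lambda>m. real (N m)) at_top sequentially"
      by (rule filterlim_compose[OF filterlim_real_sequentially Nlim])
    then show ?thesis unfolding s_def by (rule filterlim_compose[OF sqrt_at_top])
  qed
  have evN: "eventually (\<lambda>m. N m > 0) sequentially"
    using Nlim unfolding filterlim_at_top by (metis (mono_tags, lifting) eventually_mono Suc_le_eq)
  have spos: "s m > 0" if "N m > 0" for m using that unfolding s_def by simp
  define Dev where "Dev m u = {\<omega>\<in>space M. s m * (e * fp / 2) \<le>
       \<bar>(G m (p + u / s m) \<omega> - G m p \<omega>) - real (N m) * (F (p + u / s m) - \<phi>)\<bar>}" for m u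
  have Dev_meas: "Dev m u \<in> sets M" for m u unfolding Dev_def by measurable
  have Dev_lim: "(\<lambda>m. prob (Dev m u)) \<longlonglongrightarrow> 0" for u
  proof -
    define a where "a m = p + u / s m" for m
    have b: "prob (Dev m u) \<le> (F (a m) + \<phi> - 2 * F (min (a m) p)) / (e * fp / 2)\<^sup>2" if "N m > 0" for m
    proof -
      have r: "s m * (e * fp / 2) > 0" using spos[OF that] e fp by simp
      have eqset: "Dev m u = {\<omega>\<in>space M. s m * (e * fp / 2) \<le> \<bar>(\<Sum>j<N m. (if Y m j \<omega> \<le> a m then 1 else 0)
          - (if Y m j \<omega> \<le> p then 1 else 0)) - real (N m) * (F (a m) - F p)\<bar>}"
        unfolding Dev_def a_def G_def by (simp add: sum_subtractf Fp)
      have "prob (Dev m u) \<le> real (N m) * (F (a m) + F p - 2 * F (min (a m) p)) / (s m * (e * fp / 2))\<^sup>2"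
        unfolding eqset by (rule dev_bound[OF meas ind FY r])
      also have "\<dots> = (F (a m) + \<phi> - 2 * F (min (a m) p)) / (e * fp / 2)\<^sup>2"
        using spos[OF that] unfolding sN Fp by (simp add: power2_eq_square)
      finally show ?thesis .
    qed
    have h1: "(\<lambda>m. u / s m) \<longlonglongrightarrow> 0"
      by (rule tendsto_divide_0[OF tendsto_const filterlim_at_top_imp_at_infinity[OF s_top]])
    have l1: "(\<lambda>m. F (a m)) \<longlonglongrightarrow> \<phi>" unfolding a_def using F_cont_seq[OF Fd fp h1] Fp by simp
    have h2: "(\<lambda>m. min (u / s m) 0) \<longlonglongrightarrow> 0" using tendsto_min[OF h1 tendsto_const[of 0]] by simp
    have l2: "(\<lambda>m. F (min (a m) p)) \<longlonglongrightarrow> \<phi>"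
    proof -
      have "min (a m) p = p + min (u / s m) 0" for m unfolding a_def by (simp add: min_def)
      then show ?thesis using F_cont_seq[OF Fd fp h2] Fp by simp
    qed
    have "(\<lambda>m. (F (a m) + \<phi> - 2 * F (min (a m) p)) / (e * fp / 2)\<^sup>2) \<longlonglongrightarrow> (\<phi> + \<phi> - 2 * \<phi>) / (e * fp / 2)\<^sup>2"
      by (intro tendsto_intros l1 l2) (use e fp in simp)
    then have lim0: "(\<lambda>m. (F (a m) + \<phi> - 2 * F (min (a m) p)) / (e * fp / 2)\<^sup>2) \<longlonglongrightarrow> 0" using e fp by simp
    show ?thesis
    proof (rule tendsto_sandwich[OF _ _ tendsto_const lim0])
      show "eventually (\<lambda>m. 0 \<le> prob (Dev m u)) sequentially" by simp
      show "eventually (\<lambda>m. prob (Dev m u) \<le> (F (a m) + \<phi> - 2 * F (min (a m) p)) / (e * fp / 2)\<^sup>2) sequentially"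
        using evN by eventually_elim (rule b)
    qed
  qed
  define Bad where "Bad m = {\<omega>\<in>space M. \<epsilon> < \<bar>s m * (q m \<omega> - p) + (G m p \<omega> - real (N m) * \<phi>) / (s m * fp)\<bar>}" for m
  have main: "(\<lambda>m. prob (Bad m)) \<longlonglongrightarrow> 0"
  proof (rule order_tendstoI)
    fix a :: real assume "a < 0"
    then show "eventually (\<lambda>m. a < prob (Bad m)) sequentially"
      by (intro always_eventually allI) (auto intro: less_le_trans[OF _ measure_nonneg])
  next
    fix \<eta> :: real assume \<eta>: "0 < \<eta>"
    define K where "K = 2 * \<phi> / (\<eta> * fp\<^sup>2) + 1"
    have K1: "K \<ge> 1" unfolding K_def using \<phi> \<eta> fp by simp
    have Kb: "\<phi> / (K\<^sup>2 * fp\<^sup>2) < \<eta> / 2"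
    proof -
      have "K \<le> K\<^sup>2" using K1 by (simp add: power2_eq_square)
      then have "\<phi> / (K\<^sup>2 * fp\<^sup>2) \<le> \<phi> / (K * fp\<^sup>2)"
        using K1 fp \<phi> by (intro divide_left_mono mult_right_mono) auto
      also have "\<dots> < \<eta> / 2"
      proof -
        have "2 * \<phi> < \<eta> * fp\<^sup>2 * K" unfolding K_def using \<eta> fp \<phi> by (simp add: field_simps)
        then show ?thesis using K1 fp \<eta> by (simp add: field_simps)
      qed
      finally show ?thesis .
    qed
    obtain T where T: "finite T" "\<forall>w. -K - 2 * e \<le> w \<and> w \<le> K \<longrightarrow> (\<exists>t\<in>T. w \<le> t \<and> t \<le> w + e)"
      using grid_exists[OF e] by blast
    define U where "U = T \<union> (\<lambda>t. t + e) ` T"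
    have U: "finite U" using T by (simp add: U_def)
    define Tight where "Tight m = {\<omega>\<in>space M. K * s m * fp \<le> \<bar>G m p \<omega> - real (N m) * \<phi>\<bar>}" for m
    have Tm: "Tight m \<in> sets M" for m unfolding Tight_def by measurable
    have Tb: "prob (Tight m) \<le> \<phi> / (K\<^sup>2 * fp\<^sup>2)" if "N m > 0" for m
    proof -
      have r: "K * s m * fp > 0" using spos[OF that] K1 fp by simp
      have "prob (Tight m) \<le> real (N m) * F p / (K * s m * fp)\<^sup>2"
        unfolding Tight_def G_def Fp[symmetric] by (rule count_bound[OF meas ind FY r])
      also have "\<dots> = \<phi> / (K\<^sup>2 * fp\<^sup>2)"
        using spos[OF that] K1 fp unfolding sN Fp by (simp add: power2_eq_square)
      finally show ?thesis .
    qed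
    have sumlim: "(\<lambda>m. \<Sum>u\<in>U. prob (Dev m u)) \<longlonglongrightarrow> 0"
      by (rule tendsto_null_sum) (rule Dev_lim)
    have ev_sum: "eventually (\<lambda>m. (\<Sum>u\<in>U. prob (Dev m u)) < \<eta> / 2) sequentially"
      using order_tendstoD(2)[OF sumlim, of "\<eta> / 2"] \<eta> by simp
    have lim1: "(\<lambda>m. s m * (F (p + t / s m) - \<phi>)) \<longlonglongrightarrow> t * fp" for t
      using F_scaled_seq[OF Fd s_top] Fp by simp
    have evC1: "eventually (\<lambda>m. \<forall>t\<in>T. s m * (F (p + t / s m) - \<phi>) < t * fp + e * fp / 2) sequentially"
    proof (intro eventually_ball_finite[OF T(1)] ballI)
      fix t assume "t \<in> T"
      show "eventually (\<lambda>m. s m * (F (p + t / s m) - \<phi>) < t * fp + e * fp / 2) sequentially"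
        by (rule order_tendstoD(2)[OF lim1[of t]]) (insert mult_pos_pos[OF e fp], linarith)
    qed
    have evC2: "eventually (\<lambda>m. \<forall>t\<in>T. (t + e) * fp - e * fp / 4 < s m * (F (p + (t + e) / s m) - \<phi>)) sequentially"
    proof (intro eventually_ball_finite[OF T(1)] ballI)
      fix t assume "t \<in> T"
      show "eventually (\<lambda>m. (t + e) * fp - e * fp / 4 < s m * (F (p + (t + e) / s m) - \<phi>)) sequentially"
        by (rule order_tendstoD(1)[OF lim1[of "t + e"]]) (insert mult_pos_pos[OF e fp], linarith)
    qed
    have evC3: "eventually (\<lambda>m. 4 / (e * fp) \<le> s m) sequentially"
      using s_top by (simp add: filterlim_at_top)
    have evincl: "eventually (\<lambda>m. Bad m \<subseteq> Tight m \<union> (\<Union>u\<in>U. Dev m u)) sequentially"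
      using evC1 evC2 evC3 evN
    proof eventually_elim
      case (elim m)
      note C1 = elim(1) and C2 = elim(2) and C3 = elim(3) and Npos = elim(4)
      have sm: "s m > 0" using spos[OF Npos] .
      show ?case
      proof
        fix \<omega> assume B: "\<omega> \<in> Bad m"
        show "\<omega> \<in> Tight m \<union> (\<Union>u\<in>U. Dev m u)"
        proof (cases "\<omega> \<in> Tight m")
          case True then show ?thesis by simp
        next
          case False
          define V where "V = s m * (q m \<omega> - p)"
          define X where "X = (G m p \<omega> - real (N m) * \<phi>) / (s m * fp)"
          have om: "\<omega> \<in> space M" using B by (simp add: Bad_def)
          have VX: "\<epsilon> < \<bar>V + X\<bar>" using B by (simp add: Bad_def V_def X_def)
          have GX: "G m p \<omega> - real (N m) * \<phi> = X * (s m * fp)" unfolding X_def using sm fp by simp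
          have "\<bar>G m p \<omega> - real (N m) * \<phi>\<bar> < K * (s m * fp)" using False om by (simp add: Tight_def mult.assoc)
          then have Xb: "\<bar>X\<bar> < K" unfolding GX using sm fp by (simp add: abs_mult)
          show ?thesis
          proof (cases "V + X > 0")
            case True
            then have VX3: "V + X > 3 * e" using VX by (simp add: e_def)
            have "-K - 2 * e \<le> -X \<and> -X \<le> K" using Xb e by auto
            then obtain t where t: "t \<in> T" "-X \<le> t" "t \<le> -X + e" using T(2) by blast
            have "t + e < V" using t VX3 by linarith
            then have "(t + e) / s m < q m \<omega> - p" unfolding V_def using sm by (simp add: divide_less_eq mult.commute)
            then have "\<not> q m \<omega> \<le> p + (t + e) / s m" by linarith
            then have Ga: "G m (p + (t + e) / s m) \<omega> < kk m" using qle[OF Npos] by (simp add: not_le)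
            have W: "- (G m p \<omega> - real (N m) * \<phi>) \<le> t * (s m * fp)"
              unfolding GX using t(2) sm fp mult_right_mono[of "-X" t "s m * fp"] by simp
            have "s m * (e * fp / 2) \<le> \<bar>(G m (p + (t + e) / s m) \<omega> - G m p \<omega>) - real (N m) * (F (p + (t + e) / s m) - \<phi>)\<bar>"
              by (rule caseA_arith[OF sm fp e sN Ga kk2 W]) (use C2 C3 t(1) in auto)
            then have "\<omega> \<in> Dev m (t + e)" unfolding Dev_def using om by simp
            moreover have "t + e \<in> U" unfolding U_def using t(1) by simp
            ultimately show ?thesis by blast
          next
            case False
            then have VX3: "V + X < - 3 * e" using VX by (simp add: e_def)
            have "-K - 2 * e \<le> -X - 2 * e \<and> -X - 2 * e \<le> K" using Xb e by auto
            then obtain t where t: "t \<in> T" "-X - 2 * e \<le> t" "t \<le> -X - 2 * e + e" using T(2) by blast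
            have "V \<le> t" using t VX3 by linarith
            then have "q m \<omega> - p \<le> t / s m" unfolding V_def using sm by (simp add: le_divide_eq mult.commute)
            then have "q m \<omega> \<le> p + t / s m" by linarith
            then have Ga: "kk m \<le> G m (p + t / s m) \<omega>" using qle[OF Npos] by simp
            have W: "G m p \<omega> - real (N m) * \<phi> \<le> - ((t + e) * (s m * fp))"
              unfolding GX using t(3) sm fp mult_right_mono[of "t + e" "-X" "s m * fp"] by simp
            have "s m * (e * fp / 2) \<le> \<bar>(G m (p + t / s m) \<omega> - G m p \<omega>) - real (N m) * (F (p + t / s m) - \<phi>)\<bar>"
              by (rule caseB_arith[OF sm fp e sN Ga kk1 W]) (use C1 t(1) in auto)
            then have "\<omega> \<in> Dev m t" unfolding Dev_def using om by simp
            moreover have "t \<in> U" unfolding U_def using t(1) by simp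
            ultimately show ?thesis by blast
          qed
        qed
      qed
    qed
    show "eventually (\<lambda>m. prob (Bad m) < \<eta>) sequentially"
      using evincl ev_sum evN
    proof eventually_elim
      case (elim m)
      have UD: "(\<Union>u\<in>U. Dev m u) \<in> sets M" using Dev_meas U by (intro sets.finite_UN) auto
      have 1: "prob (Bad m) \<le> prob (Tight m \<union> (\<Union>u\<in>U. Dev m u))"
        by (rule finite_measure_mono[OF elim(1)]) (use Tm UD in auto)
      have 2: "prob (Tight m \<union> (\<Union>u\<in>U. Dev m u)) \<le> prob (Tight m) + prob (\<Union>u\<in>U. Dev m u)"
        by (rule measure_Un_le) (use Tm UD in auto)
      have 3: "prob (\<Union>u\<in>U. Dev m u) \<le> (\<Sum>u\<in>U. prob (Dev m u))"
        by (rule finite_measure_subadditive_finite) (use Dev_meas U in auto)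
      show ?case using 1 2 3 Tb[OF elim(3)] Kb elim(2) by linarith
    qed
  qed
  have eqB: "{\<omega>\<in>space M. \<epsilon> < \<bar>sqrt (real (N m)) * (sample_quantile \<phi> (map (\<lambda>j. Y m j \<omega>) [0..<N m]) - p)
            + (real (length (filter (\<lambda>x. x \<le> p) (map (\<lambda>j. Y m j \<omega>) [0..<N m]))) - real (N m) * \<phi>)
              / (sqrt (real (N m)) * fp)\<bar>} = Bad m" for m
    unfolding Bad_def s_def q_def G_def count_map_sum ..
  show ?thesis unfolding eqB by (rule main)
qed

lemma std_normal_upper_quantile_pos:
  assumes "0 < \<beta>" "\<beta> < 1 / 2"
  shows "std_normal_upper_quantile \<beta> > 0"
proof -
  define ND where "ND = density lborel (\<lambda>x. ennreal (std_normal_density x))"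
  have psND: "prob_space ND" unfolding ND_def by (rule prob_space_normal_density) simp
  have rd: "real_distribution ND"
    unfolding real_distribution_def real_distribution_axioms_def using psND
    by (simp add: ND_def)
  interpret real_distribution ND by (rule rd)
  define T where "T z = measure ND {z<..}" for z
  have spND: "space ND = UNIV" by (simp add: ND_def)
  have Tcdf: "T z = 1 - cdf ND z" for z
  proof -
    have "T z = measure ND (space ND - {..z})" unfolding T_def spND
      by (rule arg_cong[where f="measure ND"]) auto
    also have "\<dots> = 1 - measure ND {..z}" by (rule prob_compl) simp
    finally show ?thesis by (simp add: cdf_def)
  qed
  have atom: "measure ND {x} = 0" for x
  proof -
    have "emeasure ND {x} = (\<integral>\<^sup>+ y. ennreal (std_normal_density y) * indicator {x} y \<partial>lborel)"
      unfolding ND_def by (rule emeasure_density) auto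
    also have "\<dots> = 0"
      using AE_lborel_singleton[of x] by (subst nn_integral_0_iff_AE) (auto elim!: eventually_mono simp: indicator_def)
    finally show ?thesis by (simp add: measure_def)
  qed
  have Tcont: "isCont T x" for x
  proof -
    have "isCont (cdf ND) x" using isCont_cdf atom by simp
    then have "isCont (\<lambda>z. 1 - cdf ND z) x" by (intro continuous_intros)
    then show ?thesis unfolding Tcdf[abs_def] .
  qed
  have Tstrict: "T b < T a" if ab: "a < b" for a b
  proof -
    define c where "c = (1 / sqrt (2 * pi)) * exp (- (a\<^sup>2 + b\<^sup>2) / 2)"
    have cpos: "c > 0" unfolding c_def by simp
    have le: "ennreal c * indicator {a<..b} x \<le> ennreal (std_normal_density x) * indicator {a<..b} x" for x
    proof (cases "x \<in> {a<..b}")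
      case True
      then have "x\<^sup>2 \<le> a\<^sup>2 + b\<^sup>2"
      proof (cases "x \<ge> 0")
        case True
        then have "x\<^sup>2 \<le> b\<^sup>2" using \<open>x \<in> {a<..b}\<close> by (intro power_mono) auto
        then show ?thesis by (simp add: add_increasing)
      next
        case False
        then have "(-x)\<^sup>2 \<le> (-a)\<^sup>2" using \<open>x \<in> {a<..b}\<close> by (intro power_mono) auto
        then have "x\<^sup>2 \<le> a\<^sup>2" by simp
        then show ?thesis by (simp add: add_increasing2)
      qed
      then have "exp (- (a\<^sup>2 + b\<^sup>2) / 2) \<le> exp (- x\<^sup>2 / 2)" by simp
      then have "c \<le> std_normal_density x" unfolding c_def std_normal_density_def
        by (intro mult_left_mono) auto
      then show ?thesis using True by (simp add: ennreal_leI)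
    qed auto
    have "ennreal (c * (b - a)) = (\<integral>\<^sup>+ x. ennreal c * indicator {a<..b} x \<partial>lborel)"
      using ab cpos by (subst nn_integral_cmult_indicator) (auto simp: ennreal_mult)
    also have "\<dots> \<le> (\<integral>\<^sup>+ x. ennreal (std_normal_density x) * indicator {a<..b} x \<partial>lborel)"
      by (rule nn_integral_mono) (rule le)
    also have "\<dots> = emeasure ND {a<..b}" unfolding ND_def by (rule emeasure_density[symmetric]) auto
    also have "\<dots> = ennreal (measure ND {a<..b})" by (simp add: emeasure_eq_measure)
    finally have "c * (b - a) \<le> measure ND {a<..b}" by (simp add: ennreal_le_iff)
    moreover have "c * (b - a) > 0" using cpos ab by simp
    moreover have "T a - T b = measure ND {a<..b}" unfolding Tcdf using cdf_diff_eq[OF ab] by simp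
    ultimately show ?thesis by linarith
  qed
  have T0: "T 0 = 1 / 2"
  proof -
    have "emeasure ND {..<0} = (\<integral>\<^sup>+ x. ennreal (std_normal_density x) * indicator {..<0} x \<partial>lborel)"
      unfolding ND_def by (rule emeasure_density) auto
    also have "\<dots> = ennreal \<bar>-1\<bar> * (\<integral>\<^sup>+ x. ennreal (std_normal_density (0 + -1 * x)) * indicator {..<0} (0 + -1 * x) \<partial>lborel)"
      by (rule nn_integral_real_affine) auto
    also have "\<dots> = (\<integral>\<^sup>+ x. ennreal (std_normal_density x) * indicator {0<..} x \<partial>lborel)"
    proof -
      have e1: "ennreal (std_normal_density (0 + -1 * x)) * indicator {..<0} (0 + -1 * x)
          = ennreal (std_normal_density x) * (indicator {0<..} x :: ennreal)" for x :: real
        by (simp add: std_normal_density_def indicator_def)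
      show ?thesis by (simp only: e1) simp
    qed
    also have "\<dots> = emeasure ND {0<..}" unfolding ND_def by (rule emeasure_density[symmetric]) auto
    finally have "measure ND {..<0} = measure ND {0<..}" by (simp add: measure_def)
    moreover have "measure ND ({..<0} \<union> {0} \<union> {0<..}) = measure ND {..<0} + measure ND {0} + measure ND {0<..}"
    proof -
      have "measure ND ({..<0} \<union> {0}) = measure ND {..<0} + measure ND {0}"
        by (rule finite_measure_Union) auto
      moreover have "measure ND (({..<0} \<union> {0}) \<union> {0<..}) = measure ND ({..<0} \<union> {0}) + measure ND {0<..}"
        by (rule finite_measure_Union) auto
      ultimately show ?thesis by simp
    qed
    moreover have "{..<0} \<union> {0} \<union> {0<..} = (UNIV :: real set)" by auto
    ultimately have "1 = 2 * measure ND {0<..}" using atom[of 0] prob_space spND by simp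
    then show ?thesis unfolding T_def by simp
  qed
  have Tlim: "(T \<longlongrightarrow> 0) at_top"
  proof -
    have "((\<lambda>z. 1 - cdf ND z) \<longlongrightarrow> 1 - 1) at_top" by (intro tendsto_intros cdf_lim_at_top_prob)
    then show ?thesis unfolding Tcdf[abs_def] by simp
  qed
  obtain b where b: "b \<ge> 0" "T b < \<beta>"
  proof -
    have "eventually (\<lambda>z. T z < \<beta>) at_top" using order_tendstoD(2)[OF Tlim] assms by simp
    then obtain b0 where "\<forall>z\<ge>b0. T z < \<beta>" by (auto simp: eventually_at_top_linorder)
    then show ?thesis using that[of "max b0 0"] by simp
  qed
  have "\<exists>x\<ge>0. x \<le> b \<and> T x = \<beta>"
    by (rule IVT2) (use b T0 assms Tcont in auto)
  then obtain z where z: "z \<ge> 0" "z \<le> b" "T z = \<beta>" by blast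
  have uniq: "z' = z" if "T z' = \<beta>" for z'
  proof (rule ccontr)
    assume "z' \<noteq> z"
    then have "z' < z \<or> z < z'" by linarith
    then show False using Tstrict[of z' z] Tstrict[of z z'] that z by auto
  qed
  have u2: "\<And>z'. measure (density lborel (\<lambda>x. ennreal (std_normal_density x))) {z'<..} = \<beta> \<Longrightarrow> z' = z"
    using uniq unfolding T_def ND_def by blast
  have z2: "measure (density lborel (\<lambda>x. ennreal (std_normal_density x))) {z<..} = \<beta>"
    using z(3) unfolding T_def ND_def .
  have "std_normal_upper_quantile \<beta> = z"
    unfolding std_normal_upper_quantile_def
    by (rule the_equality[where a=z]) (auto intro: z2 u2)
  moreover have "z \<noteq> 0" using z T0 assms by auto
  ultimately show ?thesis using z by simp
qed

lemma ring_eq_1: "(c + e) * (b - a) = (b - a) * c + e * (b - a)" for a b c e :: real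
  by (simp add: algebra_simps)
lemma ring_eq_2: "(c - e) * (b - a) = (b - a) * c - e * (b - a)" for a b c e :: real
  by (simp add: algebra_simps)

lemma interval_bound:
  fixes f :: "real \<Rightarrow> real"
  assumes fm: "(\<lambda>x. ennreal (f x)) \<in> borel_measurable lborel"
    and ps: "prob_space (density lborel (\<lambda>x. ennreal (f x)))"
    and ab: "a < b" and close: "\<And>x. a < x \<Longrightarrow> x \<le> b \<Longrightarrow> \<bar>f x - c\<bar> \<le> e"
    and ec: "0 \<le> e" "e \<le> c"
  shows "\<bar>measure (density lborel (\<lambda>x. ennreal (f x))) {a<..b} - (b - a) * c\<bar> \<le> e * (b - a)"
proof -
  define D where "D = density lborel (\<lambda>x. ennreal (f x))"
  interpret prob_space D using ps by (simp add: D_def)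
  have emD: "emeasure D {a<..b} = (\<integral>\<^sup>+ x. ennreal (f x) * indicator {a<..b} x \<partial>lborel)"
    unfolding D_def by (rule emeasure_density[OF fm]) simp
  have up1: "ennreal (f x) * indicator {a<..b} x \<le> ennreal (c + e) * indicator {a<..b} x" for x
  proof (cases "x \<in> {a<..b}")
    case True
    then have "f x \<le> c + e" using close[of x] by auto
    then show ?thesis using True by (simp add: ennreal_leI)
  qed auto
  have lo1: "ennreal (c - e) * indicator {a<..b} x \<le> ennreal (f x) * indicator {a<..b} x" for x
  proof (cases "x \<in> {a<..b}")
    case True
    then have "c - e \<le> f x" using close[of x] by auto
    then show ?thesis using True by (simp add: ennreal_leI)
  qed auto
  have "ennreal (measure D {a<..b}) = emeasure D {a<..b}" by (simp add: emeasure_eq_measure)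
  also have "\<dots> \<le> (\<integral>\<^sup>+ x. ennreal (c + e) * indicator {a<..b} x \<partial>lborel)"
    unfolding emD by (rule nn_integral_mono) (rule up1)
  also have "\<dots> = ennreal ((c + e) * (b - a))"
    using ab ec by (subst nn_integral_cmult_indicator) (auto simp: ennreal_mult)
  finally have U: "measure D {a<..b} \<le> (c + e) * (b - a)"
    using ab ec by (subst (asm) ennreal_le_iff) auto
  have "ennreal ((c - e) * (b - a)) = (\<integral>\<^sup>+ x. ennreal (c - e) * indicator {a<..b} x \<partial>lborel)"
    using ab ec by (subst nn_integral_cmult_indicator) (auto simp: ennreal_mult)
  also have "\<dots> \<le> emeasure D {a<..b}"
    unfolding emD by (rule nn_integral_mono) (rule lo1)
  also have "\<dots> = ennreal (measure D {a<..b})" by (simp add: emeasure_eq_measure)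
  finally have L: "(c - e) * (b - a) \<le> measure D {a<..b}"
    by (subst (asm) ennreal_le_iff) auto
  have eqs1: "(c + e) * (b - a) = (b - a) * c + e * (b - a)" by (rule ring_eq_1)
  have eqs2: "(c - e) * (b - a) = (b - a) * c - e * (b - a)" by (rule ring_eq_2)
  have "\<bar>measure D {a<..b} - (b - a) * c\<bar> \<le> e * (b - a)" using U L eqs1 eqs2 by (smt (verit))
  then show ?thesis by (simp add: D_def)
qed

lemma cdf_Fd:
  fixes f :: "real \<Rightarrow> real"
  assumes fm: "(\<lambda>x. ennreal (f x)) \<in> borel_measurable lborel"
    and ps: "prob_space (density lborel (\<lambda>x. ennreal (f x)))"
    and cont: "isCont f p" and fp: "f p > 0" and e: "e > 0"
  defines "F \<equiv> (\<lambda>x. measure (density lborel (\<lambda>x. ennreal (f x))) {..x})"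
  shows "\<exists>\<delta>>0. \<forall>h. \<bar>h\<bar> < \<delta> \<longrightarrow> \<bar>F (p + h) - F p - h * f p\<bar> \<le> e * \<bar>h\<bar>"
proof -
  define D where "D = density lborel (\<lambda>x. ennreal (f x))"
  interpret prob_space D using ps by (simp add: D_def)
  have diff: "F b - F a = measure D {a<..b}" if "a < b" for a b
  proof -
    have "{..b} = {..a} \<union> {a<..b}" using that by auto
    then have "measure D {..b} = measure D ({..a} \<union> {a<..b})" by simp
    also have "\<dots> = measure D {..a} + measure D {a<..b}"
      by (rule finite_measure_Union) (auto simp: D_def)
    finally show ?thesis unfolding F_def D_def by simp
  qed
  define e' where "e' = min e (f p)"
  have e': "e' > 0" "e' \<le> e" "e' \<le> f p" using e fp by (auto simp: e'_def)
  obtain \<delta> where d: "\<delta> > 0" "\<forall>x. dist x p < \<delta> \<longrightarrow> dist (f x) (f p) < e'"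
    using cont e'(1) unfolding continuous_at_eps_delta by blast
  have "\<forall>h. \<bar>h\<bar> < \<delta> \<longrightarrow> \<bar>F (p + h) - F p - h * f p\<bar> \<le> e * \<bar>h\<bar>"
  proof (intro allI impI)
    fix h :: real assume h: "\<bar>h\<bar> < \<delta>"
    consider "h > 0" | "h = 0" | "h < 0" by linarith
    then show "\<bar>F (p + h) - F p - h * f p\<bar> \<le> e * \<bar>h\<bar>"
    proof cases
      case 1
      have cl: "\<bar>f x - f p\<bar> \<le> e'" if "p < x" "x \<le> p + h" for x
        using d(2)[rule_format, of x] that h by (auto simp: dist_real_def)
      have "\<bar>measure D {p<..p + h} - (p + h - p) * f p\<bar> \<le> e' * (p + h - p)"
        unfolding D_def using 1 cl e' by (intro interval_bound[OF fm ps]) auto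
      moreover have "F (p + h) - F p = measure D {p<..p + h}" using 1 by (intro diff) simp
      moreover have "e' * h \<le> e * \<bar>h\<bar>" using 1 e' by (simp add: mult_right_mono)
      ultimately show ?thesis by simp
    next
      case 2 then show ?thesis by simp
    next
      case 3
      have cl: "\<bar>f x - f p\<bar> \<le> e'" if "p + h < x" "x \<le> p" for x
        using d(2)[rule_format, of x] that h by (auto simp: dist_real_def)
      have "\<bar>measure D {p + h<..p} - (p - (p + h)) * f p\<bar> \<le> e' * (p - (p + h))"
        unfolding D_def using 3 cl e' by (intro interval_bound[OF fm ps]) auto
      moreover have "F p - F (p + h) = measure D {p + h<..p}" using 3 by (intro diff) simp
      moreover have "e' * (- h) \<le> e * \<bar>h\<bar>" using 3 e' by (simp add: mult_right_mono)
      ultimately show ?thesis by (simp add: abs_minus_commute) linarith?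
    qed
  qed
  then show ?thesis using d(1) by blast
qed

lemma concat_map_div_mod:
  "concat (map (\<lambda>i. map (\<lambda>j. g i j) [0..<m]) [0..<n]) = map (\<lambda>j. g (j div m) (j mod m)) [0..<n * m]"
proof (induction n)
  case 0 then show ?case by simp
next
  case (Suc n)
  have "[0..<Suc n * m] = [0..<n * m] @ [n * m..<n * m + m]"
    using upt_add_eq_append[of 0 "n * m" m] by (simp add: add.commute)
  moreover have "map (\<lambda>j. g (j div m) (j mod m)) [n * m..<n * m + m] = map (\<lambda>j. g n j) [0..<m]"
    by (rule nth_equalityI) auto
  ultimately show ?case using Suc by simp
qed

lemma count_concat:
  "real (length (filter P (concat (map l [0..<n])))) = (\<Sum>i<n. real (length (filter P (l i))))"
  by (induction n) auto

lemma combine: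
  fixes q c :: "nat \<Rightarrow> real" and n :: nat
  assumes n: "n \<ge> 1" and sm: "sm > 0" and fp: "fp > 0" and sn: "sn * sn = real n" "sn \<ge> 1"
    and Ai: "\<And>i. i < n \<Longrightarrow> \<bar>sm * (q i - p) + (c i - sm * sm * \<phi>) / (sm * fp)\<bar> \<le> \<epsilon>"
    and Ae: "\<bar>(sn * sm) * (qe - p) + ((\<Sum>i<n. c i) - (sn * sm) * (sn * sm) * \<phi>) / ((sn * sm) * fp)\<bar> \<le> \<epsilon>"
  shows "\<bar>(\<Sum>i<n. q i) / real n - qe\<bar> \<le> 2 * \<epsilon> / sm"
proof -
  define A where "A i = sm * (q i - p) + (c i - sm * sm * \<phi>) / (sm * fp)" for i
  define E where "E = (sn * sm) * (qe - p) + ((\<Sum>i<n. c i) - (sn * sm) * (sn * sm) * \<phi>) / ((sn * sm) * fp)"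
  define C where "C = (\<Sum>i<n. c i) - real n * (sm * sm * \<phi>)"
  have nz: "real n > 0" using n by simp
  have snp: "sn > 0" using sn by simp
  have h1: "sm * (q i - p) = A i - (c i - sm * sm * \<phi>) / (sm * fp)" for i unfolding A_def by simp
  have "(\<Sum>i<n. sm * (q i - p)) = (\<Sum>i<n. A i) - (\<Sum>i<n. (c i - sm * sm * \<phi>) / (sm * fp))"
    unfolding h1 by (simp add: sum_subtractf)
  moreover have "(\<Sum>i<n. sm * (q i - p)) = sm * ((\<Sum>i<n. q i) - real n * p)"
    by (simp add: sum_distrib_left[symmetric] sum_subtractf)
  moreover have "(\<Sum>i<n. (c i - sm * sm * \<phi>) / (sm * fp)) = C / (sm * fp)"
    unfolding C_def by (simp add: sum_divide_distrib[symmetric] sum_subtractf)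
  ultimately have h2: "sm * ((\<Sum>i<n. q i) - real n * p) = (\<Sum>i<n. A i) - C / (sm * fp)" by simp
  have h3: "sm * ((\<Sum>i<n. q i) / real n - p) = (\<Sum>i<n. A i) / real n - C / (real n * sm * fp)"
  proof -
    have "sm * ((\<Sum>i<n. q i) / real n - p) = sm * ((\<Sum>i<n. q i) - real n * p) / real n"
      using nz by (simp add: field_simps)
    also have "\<dots> = ((\<Sum>i<n. A i) - C / (sm * fp)) / real n" unfolding h2 ..
    also have "\<dots> = (\<Sum>i<n. A i) / real n - C / (real n * sm * fp)"
      using nz sm fp by (simp add: field_simps)
    finally show ?thesis .
  qed
  have h4: "sm * (qe - p) = E / sn - C / (real n * sm * fp)"
  proof -
    have "(sn * sm) * (sn * sm) * \<phi> = real n * (sm * sm * \<phi>)" using sn(1)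
      by (metis mult.commute mult.left_commute)
    then have "E = (sn * sm) * (qe - p) + C / ((sn * sm) * fp)" unfolding E_def C_def by simp
    then have "E / sn = sm * (qe - p) + C / (sn * sn * sm * fp)"
      using snp sm fp by (simp add: field_simps)
    then show ?thesis using sn(1) by simp
  qed
  have key: "sm * ((\<Sum>i<n. q i) / real n - qe) = (\<Sum>i<n. A i) / real n - E / sn"
    using h3 h4 by (simp add: algebra_simps)
  have SA: "\<bar>\<Sum>i<n. A i\<bar> \<le> real n * \<epsilon>"
  proof -
    have "\<bar>\<Sum>i<n. A i\<bar> \<le> (\<Sum>i<n. \<bar>A i\<bar>)" by (rule sum_abs)
    also have "\<dots> \<le> (\<Sum>i<n. \<epsilon>)" by (intro sum_mono) (use Ai in \<open>auto simp: A_def\<close>)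
    finally show ?thesis by simp
  qed
  have b1: "\<bar>(\<Sum>i<n. A i) / real n\<bar> \<le> \<epsilon>" using SA nz by (simp add: abs_div divide_le_eq mult.commute)
  have eps0: "\<epsilon> \<ge> 0" using Ae by linarith
  have b2: "\<bar>E / sn\<bar> \<le> \<epsilon>"
  proof -
    have "\<bar>E\<bar> \<le> \<epsilon>" using Ae unfolding E_def .
    also have "\<dots> \<le> \<epsilon> * sn" using eps0 sn(2) by (simp add: mult_le_cancel_left1)
    finally show ?thesis using snp by (simp add: abs_div divide_le_eq)
  qed
  have "\<bar>sm * ((\<Sum>i<n. q i) / real n - qe)\<bar> \<le> 2 * \<epsilon>" unfolding key using b1 b2 by linarith
  then have "sm * \<bar>(\<Sum>i<n. q i) / real n - qe\<bar> \<le> 2 * \<epsilon>" using sm by (simp add: abs_mult)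
  then show ?thesis using sm by (simp add: le_divide_eq mult.commute)
qed

lemma (in prob_space) count_meas:
  fixes Y :: "nat \<Rightarrow> 'a \<Rightarrow> real"
  assumes "\<And>j. j < N \<Longrightarrow> Y j \<in> borel_measurable M"
  shows "(\<lambda>\<omega>. real (length (filter (\<lambda>x. x \<le> t) (map (\<lambda>j. Y j \<omega>) [0..<N])))) \<in> borel_measurable M"
  unfolding count_map_sum
proof (rule borel_measurable_sum)
  fix j assume "j \<in> {..<N}"
  then have [measurable]: "Y j \<in> borel_measurable M" using assms by auto
  show "(\<lambda>\<omega>. if Y j \<omega> \<le> t then 1 else (0::real)) \<in> borel_measurable M" by measurable
qed

lemma eps_ident: "2 * (A / fp / (2 * sn)) / sm = A / (sn * sm * fp)" for A fp sn sm :: real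
proof (cases "fp = 0 \<or> sn = 0 \<or> sm = 0")
  case True then show ?thesis by auto
next
  case False then show ?thesis by (simp add: field_simps)
qed

theorem theorem1:
  fixes M :: "'s measure"
    and X :: "nat \<Rightarrow> nat \<Rightarrow> 's \<Rightarrow> real"
    and f :: "real \<Rightarrow> real"
    and n :: nat and \<phi> p \<alpha> :: real
  assumes "prob_space M"
    and "n \<ge> 1"
    and "0 < \<phi>" and "\<phi> < 1"
    and "prob_space.indep_vars M (\<lambda>_. borel) (\<lambda>(i, j). X i j) ({..<n} \<times> UNIV)"
    and "\<And>i j. i < n \<Longrightarrow> distributed M lborel (X i j) (\<lambda>x. ennreal (f x))"
    and "\<And>x. f x \<ge> 0"
    and "isCont f p"
    and "\<And>i j. i < n \<Longrightarrow> measure M {\<omega> \<in> space M. X i j \<omega> \<le> p} = \<phi>"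
    and "f p > 0"
    and "0 < \<alpha>" and "\<alpha> < 1"
  shows "liminf (\<lambda>m. ereal (measure M {\<omega> \<in> space M.
            \<bar>(\<Sum>i<n. sample_quantile \<phi> (map (\<lambda>j. X i j \<omega>) [0..<m])) / real n
             - sample_quantile \<phi> (concat (map (\<lambda>i. map (\<lambda>j. X i j \<omega>) [0..<m]) [0..<n]))\<bar>
            \<le> 2 * std_normal_upper_quantile (\<alpha> / 2) * sqrt (\<phi> * (1 - \<phi>))
               / (sqrt (real n * real m) * f p)}))
         \<ge> ereal (1 - \<alpha>)"
proof -
  interpret prob_space M by (rule assms(1))
  note n1 = assms(2) and \<phi>0 = assms(3) and \<phi>1 = assms(4) and indep = assms(5) and distr = assms(6)
    and cont = assms(8) and Fp0 = assms(9) and fpos = assms(10) and \<alpha>0 = assms(11) and \<alpha>1 = assms(12)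
  define D where "D = density lborel (\<lambda>x. ennreal (f x))"
  have Xml: "X i j \<in> measurable M lborel" if "i < n" for i j
    using distr[OF that] by (simp add: distributed_def)
  have Xm: "X i j \<in> borel_measurable M" if "i < n" for i j
    using Xml[OF that] by simp
  have fm: "(\<lambda>x. ennreal (f x)) \<in> borel_measurable lborel"
    using distr[of 0 0] n1 by (simp add: distributed_def)
  have Deq: "distr M lborel (X i j) = D" if "i < n" for i j
    using distr[OF that] by (simp add: distributed_def D_def)
  have psD: "prob_space D" using Deq[of 0 0] n1 prob_space_distr[OF Xml[of 0 0]] by simp
  define F where "F x = measure D {..x}" for x
  have FY: "prob {\<omega>\<in>space M. X i j \<omega> \<le> x} = F x" if "i < n" for i j x
  proof -
    have "F x = measure (distr M lborel (X i j)) {..x}" using Deq[OF that] F_def by simp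
    also have "\<dots> = measure M (X i j -` {..x} \<inter> space M)"
      by (rule measure_distr) (use Xml[OF that] in auto)
    also have "X i j -` {..x} \<inter> space M = {\<omega>\<in>space M. X i j \<omega> \<le> x}" by auto
    finally show ?thesis by simp
  qed
  have Fp: "F p = \<phi>" using FY[of 0 0 p] Fp0[of 0 0] n1 by simp
  have Fd: "\<exists>\<delta>>0. \<forall>h. \<bar>h\<bar> < \<delta> \<longrightarrow> \<bar>F (p + h) - F p - h * f p\<bar> \<le> e * \<bar>h\<bar>" if "e > 0" for e
    unfolding F_def D_def using cdf_Fd[OF fm psD[unfolded D_def] cont fpos that] by simp
  have ind2: "indep_var borel (X i j) borel (X i' j')" if "i < n" "i' < n" "(i, j) \<noteq> (i', j')" for i j i' j'
    using indep_vars_pair[OF indep, of "(i, j)" "(i', j')"] that by auto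
  define z where "z = std_normal_upper_quantile (\<alpha> / 2)"
  have zpos: "z > 0" unfolding z_def using \<alpha>0 \<alpha>1 by (intro std_normal_upper_quantile_pos) auto
  define C where "C = 2 * z * sqrt (\<phi> * (1 - \<phi>)) / f p"
  have Cpos: "C > 0" unfolding C_def using zpos \<phi>0 \<phi>1 fpos by simp
  define sn where "sn = sqrt (real n)"
  have sn: "sn \<ge> 1" "sn * sn = real n" using n1 by (auto simp: sn_def)
  define \<epsilon> where "\<epsilon> = C / (2 * sn)"
  have \<epsilon>: "\<epsilon> > 0" unfolding \<epsilon>_def using Cpos sn by simp
  define Bi where "Bi i m = {\<omega>\<in>space M. \<epsilon> < \<bar>sqrt (real m) * (sample_quantile \<phi> (map (\<lambda>j. X i j \<omega>) [0..<m]) - p)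
            + (real (length (filter (\<lambda>x. x \<le> p) (map (\<lambda>j. X i j \<omega>) [0..<m]))) - real m * \<phi>)
              / (sqrt (real m) * f p)\<bar>}" for i m
  define Be where "Be m = {\<omega>\<in>space M. \<epsilon> < \<bar>sqrt (real (n * m)) * (sample_quantile \<phi> (map (\<lambda>j. X (j div m) (j mod m) \<omega>) [0..<n * m]) - p)
            + (real (length (filter (\<lambda>x. x \<le> p) (map (\<lambda>j. X (j div m) (j mod m) \<omega>) [0..<n * m]))) - real (n * m) * \<phi>)
              / (sqrt (real (n * m)) * f p)\<bar>}" for m
  have Li: "(\<lambda>m. prob (Bi i m)) \<longlonglongrightarrow> 0" if i: "i < n" for i
  proof -
    have "(\<lambda>m. prob {\<omega>\<in>space M. \<epsilon> < \<bar>sqrt (real ((\<lambda>m. m) m)) * (sample_quantile \<phi> (map (\<lambda>j. (\<lambda>m j. X i j) m j \<omega>) [0..<(\<lambda>m. m) m]) - p)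
            + (real (length (filter (\<lambda>x. x \<le> p) (map (\<lambda>j. (\<lambda>m j. X i j) m j \<omega>) [0..<(\<lambda>m. m) m]))) - real ((\<lambda>m. m) m) * \<phi>)
              / (sqrt (real ((\<lambda>m. m) m)) * f p)\<bar>}) \<longlonglongrightarrow> 0"
    proof (rule core[where N="\<lambda>m. m" and Y="\<lambda>m j. X i j" and F=F])
      show "\<And>m j. j < m \<Longrightarrow> X i j \<in> borel_measurable M" using Xm[OF i] by simp
      show "\<And>m i' j. i' < m \<Longrightarrow> j < m \<Longrightarrow> i' \<noteq> j \<Longrightarrow> indep_var borel (X i i') borel (X i j)"
        using ind2 i by auto
      show "\<And>m j x. j < m \<Longrightarrow> prob {\<omega> \<in> space M. X i j \<omega> \<le> x} = F x" using FY i by simp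
      show "filterlim (\<lambda>m. m) at_top sequentially" by (rule filterlim_ident)
    qed (use \<phi>0 \<phi>1 Fp Fd fpos \<epsilon> in auto)
    then show ?thesis unfolding Bi_def by simp
  qed
  have Le: "(\<lambda>m. prob (Be m)) \<longlonglongrightarrow> 0"
  proof -
    have dv: "j div m < n" if "j < n * m" for j m using that by (simp add: less_mult_imp_div_less)
    have "(\<lambda>m. prob {\<omega>\<in>space M. \<epsilon> < \<bar>sqrt (real ((\<lambda>m. n * m) m)) * (sample_quantile \<phi> (map (\<lambda>j. (\<lambda>m j. X (j div m) (j mod m)) m j \<omega>) [0..<(\<lambda>m. n * m) m]) - p)
            + (real (length (filter (\<lambda>x. x \<le> p) (map (\<lambda>j. (\<lambda>m j. X (j div m) (j mod m)) m j \<omega>) [0..<(\<lambda>m. n * m) m]))) - real ((\<lambda>m. n * m) m) * \<phi>)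
              / (sqrt (real ((\<lambda>m. n * m) m)) * f p)\<bar>}) \<longlonglongrightarrow> 0"
    proof (rule core[where N="\<lambda>m. n * m" and Y="\<lambda>m j. X (j div m) (j mod m)" and F=F])
      show "\<And>m j. j < n * m \<Longrightarrow> X (j div m) (j mod m) \<in> borel_measurable M" using Xm dv by simp
      show "\<And>m i j. i < n * m \<Longrightarrow> j < n * m \<Longrightarrow> i \<noteq> j \<Longrightarrow>
              indep_var borel (X (i div m) (i mod m)) borel (X (j div m) (j mod m))"
      proof -
        fix m i j assume ij: "i < n * m" "j < n * m" "i \<noteq> j"
        have "(i div m, i mod m) \<noteq> (j div m, j mod m)"
          using ij(3) by (metis div_mult_mod_eq prod.inject)
        then show "indep_var borel (X (i div m) (i mod m)) borel (X (j div m) (j mod m))"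
          using ind2 dv ij by auto
      qed
      show "\<And>m j x. j < n * m \<Longrightarrow> prob {\<omega> \<in> space M. X (j div m) (j mod m) \<omega> \<le> x} = F x"
        using FY dv by simp
      show "filterlim (\<lambda>m. n * m) at_top sequentially"
        by (rule filterlim_at_top_mono[OF filterlim_ident]) (use n1 in simp)
    qed (use \<phi>0 \<phi>1 Fp Fd fpos \<epsilon> in auto)
    then show ?thesis unfolding Be_def by simp
  qed
  define S where "S m = {\<omega> \<in> space M.
            \<bar>(\<Sum>i<n. sample_quantile \<phi> (map (\<lambda>j. X i j \<omega>) [0..<m])) / real n
             - sample_quantile \<phi> (concat (map (\<lambda>i. map (\<lambda>j. X i j \<omega>) [0..<m]) [0..<n]))\<bar>
            \<le> 2 * std_normal_upper_quantile (\<alpha> / 2) * sqrt (\<phi> * (1 - \<phi>))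
               / (sqrt (real n * real m) * f p)}" for m
  have dv: "j div m < n" if "j < n * m" for j m using that by (simp add: less_mult_imp_div_less)
  have qim: "(\<lambda>\<omega>. sample_quantile \<phi> (map (\<lambda>j. X i j \<omega>) [0..<m])) \<in> borel_measurable M" if "i < n" for i m
    using quantile_meas[of \<phi> m "\<lambda>j. X i j"] \<phi>0 \<phi>1 Xm[OF that] by simp
  have qem': "(\<lambda>\<omega>. sample_quantile \<phi> (map (\<lambda>j. X (j div m) (j mod m) \<omega>) [0..<n * m])) \<in> borel_measurable M" for m
    using quantile_meas[of \<phi> "n * m" "\<lambda>j. X (j div m) (j mod m)"] \<phi>0 \<phi>1 Xm dv by simp
  have qem: "(\<lambda>\<omega>. sample_quantile \<phi> (concat (map (\<lambda>i. map (\<lambda>j. X i j \<omega>) [0..<m]) [0..<n]))) \<in> borel_measurable M" for m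
    unfolding concat_map_div_mod by (rule qem')
  have sum_m: "(\<lambda>\<omega>. \<Sum>i<n. sample_quantile \<phi> (map (\<lambda>j. X i j \<omega>) [0..<m])) \<in> borel_measurable M" for m
    by (rule borel_measurable_sum) (rule qim, simp)
  have Sm: "S m \<in> sets M" for m
  proof -
    note [measurable] = sum_m[of m] qem[of m]
    show ?thesis unfolding S_def by measurable
  qed
  have Bim: "Bi i m \<in> sets M" if "i < n" for i m
  proof -
    note [measurable] = qim[OF that, of m] count_meas[of m "\<lambda>j. X i j" p, OF Xm[OF that]]
    show ?thesis unfolding Bi_def by measurable
  qed
  have Bem: "Be m \<in> sets M" for m
  proof -
    note [measurable] = qem'[of m] count_meas[of "n * m" "\<lambda>j. X (j div m) (j mod m)" p, OF Xm[OF dv]]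
    show ?thesis unfolding Be_def by measurable
  qed
  have incl: "space M - S m \<subseteq> (\<Union>i<n. Bi i m) \<union> Be m" if m0: "m > 0" for m
  proof
    fix \<omega> assume \<omega>: "\<omega> \<in> space M - S m"
    show "\<omega> \<in> (\<Union>i<n. Bi i m) \<union> Be m"
    proof (rule ccontr)
      assume "\<not> ?thesis"
      then have nb: "\<And>i. i < n \<Longrightarrow> \<omega> \<notin> Bi i m" "\<omega> \<notin> Be m" by auto
      define sm where "sm = sqrt (real m)"
      have sm: "sm > 0" "real m = sm * sm" using m0 by (auto simp: sm_def)
      define q where "q i = sample_quantile \<phi> (map (\<lambda>j. X i j \<omega>) [0..<m])" for i
      define c where "c i = real (length (filter (\<lambda>x. x \<le> p) (map (\<lambda>j. X i j \<omega>) [0..<m])))" for i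
      define qe where "qe = sample_quantile \<phi> (concat (map (\<lambda>i. map (\<lambda>j. X i j \<omega>) [0..<m]) [0..<n]))"
      have Ai: "\<bar>sm * (q i - p) + (c i - sm * sm * \<phi>) / (sm * f p)\<bar> \<le> \<epsilon>" if "i < n" for i
      proof -
        have "\<not> \<epsilon> < \<bar>sqrt (real m) * (sample_quantile \<phi> (map (\<lambda>j. X i j \<omega>) [0..<m]) - p)
            + (real (length (filter (\<lambda>x. x \<le> p) (map (\<lambda>j. X i j \<omega>) [0..<m]))) - real m * \<phi>)
              / (sqrt (real m) * f p)\<bar>" using nb(1)[OF that] \<omega> unfolding Bi_def by auto
        note h = this[folded sm_def, unfolded sm(2), folded q_def c_def]
        then show ?thesis by (simp only: not_less)
      qed
      have Ae: "\<bar>(sn * sm) * (qe - p) + ((\<Sum>i<n. c i) - (sn * sm) * (sn * sm) * \<phi>) / ((sn * sm) * f p)\<bar> \<le> \<epsilon>"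
      proof -
        have e1: "sqrt (real (n * m)) = sn * sm" by (simp add: sn_def sm_def real_sqrt_mult)
        have e2: "real (n * m) = (sn * sm) * (sn * sm)" using sn sm by (simp add: algebra_simps)
        have e3: "map (\<lambda>j. X (j div m) (j mod m) \<omega>) [0..<n * m] = concat (map (\<lambda>i. map (\<lambda>j. X i j \<omega>) [0..<m]) [0..<n])"
          by (rule concat_map_div_mod[symmetric])
        have e4: "real (length (filter (\<lambda>x. x \<le> p) (concat (map (\<lambda>i. map (\<lambda>j. X i j \<omega>) [0..<m]) [0..<n])))) = (\<Sum>i<n. c i)"
          unfolding c_def by (rule count_concat)
        have "\<not> \<epsilon> < \<bar>sqrt (real (n * m)) * (sample_quantile \<phi> (map (\<lambda>j. X (j div m) (j mod m) \<omega>) [0..<n * m]) - p)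
            + (real (length (filter (\<lambda>x. x \<le> p) (map (\<lambda>j. X (j div m) (j mod m) \<omega>) [0..<n * m]))) - real (n * m) * \<phi>)
              / (sqrt (real (n * m)) * f p)\<bar>" using nb(2) \<omega> unfolding Be_def by auto
        note h = this[unfolded e1, unfolded e3, unfolded e4, unfolded e2, folded qe_def]
        then show ?thesis by (simp only: not_less)
      qed
      have "\<bar>(\<Sum>i<n. q i) / real n - qe\<bar> \<le> 2 * \<epsilon> / sm"
        by (rule combine[OF n1 sm(1) fpos sn(2) sn(1) Ai Ae])
      also have "2 * \<epsilon> / sm = 2 * std_normal_upper_quantile (\<alpha> / 2) * sqrt (\<phi> * (1 - \<phi>)) / (sqrt (real n * real m) * f p)"
      proof -
        have "sqrt (real n * real m) = sn * sm" by (simp add: sn_def sm_def real_sqrt_mult)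
        then show ?thesis unfolding \<epsilon>_def C_def z_def by (simp only: eps_ident)
      qed
      finally have "\<omega> \<in> S m" using \<omega> unfolding S_def q_def qe_def by simp
      then show False using \<omega> by simp
    qed
  qed
  have bound: "1 \<le> prob (S m) + (\<Sum>i<n. prob (Bi i m)) + prob (Be m)" if m0: "m > 0" for m
  proof -
    have UB: "(\<Union>i<n. Bi i m) \<in> sets M" using Bim by (intro sets.finite_UN) auto
    have sub: "space M \<subseteq> S m \<union> ((\<Union>i<n. Bi i m) \<union> Be m)" using incl[OF m0] by auto
    have "1 = prob (space M)" by (simp add: prob_space)
    also have "\<dots> \<le> prob (S m \<union> ((\<Union>i<n. Bi i m) \<union> Be m))"
      by (rule finite_measure_mono[OF sub]) (use Sm UB Bem in auto)
    also have "\<dots> \<le> prob (S m) + prob ((\<Union>i<n. Bi i m) \<union> Be m)"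
      by (rule measure_Un_le) (use Sm UB Bem in auto)
    also have "prob ((\<Union>i<n. Bi i m) \<union> Be m) \<le> prob (\<Union>i<n. Bi i m) + prob (Be m)"
      by (rule measure_Un_le) (use UB Bem in auto)
    also have "prob (\<Union>i<n. Bi i m) \<le> (\<Sum>i<n. prob (Bi i m))"
      by (rule finite_measure_subadditive_finite) (use Bim in auto)
    finally show ?thesis by simp
  qed
  have lowlim: "(\<lambda>m. 1 - (\<Sum>i<n. prob (Bi i m)) - prob (Be m)) \<longlonglongrightarrow> 1 - 0 - 0"
    by (intro tendsto_intros tendsto_null_sum Le Li) simp
  have limS: "(\<lambda>m. prob (S m)) \<longlonglongrightarrow> 1"
  proof (rule tendsto_sandwich[OF _ _ _ tendsto_const])
    show "eventually (\<lambda>m. 1 - (\<Sum>i<n. prob (Bi i m)) - prob (Be m) \<le> prob (S m)) sequentially"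
      using eventually_gt_at_top[of 0]
    proof eventually_elim
      case (elim m)
      show ?case using bound[OF elim] by linarith
    qed
    show "eventually (\<lambda>m. prob (S m) \<le> 1) sequentially" by simp
    show "(\<lambda>m. 1 - (\<Sum>i<n. prob (Bi i m)) - prob (Be m)) \<longlonglongrightarrow> 1" using lowlim by simp
  qed
  have "liminf (\<lambda>m. ereal (prob (S m))) = ereal 1"
    by (rule lim_imp_Liminf) (simp, rule tendsto_ereal[OF limS])
  then have "liminf (\<lambda>m. ereal (prob (S m))) \<ge> ereal (1 - \<alpha>)" using \<alpha>0 by simp
  then show ?thesis unfolding S_def .
qed

end
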